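(* Let $0<\lambda<\frac{5-\sqrt{21}}{2}$ and let $K$ be the attractor of the IFS $f_1(x)=\lambda x$, $f_2(x)=\lambda x+2\lambda$, $f_3(x)=\lambda x+3\lambda-\lambda^2$, $f_4(x)=\lambda x+1-\lambda$. Then $U_{2i}=\emptyset$ for every integer $i\ge3$ such that $2i$ is not a power of $2$.
   Context: A coding of $x\in K$ is a sequence $(i_n)\in\{1,2,3,4\}^{\mathbb{N}}$ with $x=\lim_{n\to\infty}f_{i_1}\circ\cdots\circ f_{i_n}(0)$. $U_k$ denotes the set of $x\in K$ having exactly $k$ distinct codings. *)

theory Defs
  imports "HOL-Analysis.Analysis"
begin

definition ifs :: "real \<Rightarrow> nat \<Rightarrow> real \<Rightarrow> real" where
  "ifs lam i x =
     (if i = 1 then lam * x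
      else if i = 2 then lam * x + 2 * lam
      else if i = 3 then lam * x + 3 * lam - lam ^ 2
      else lam * x + 1 - lam)"

text \<open>comp_pt lam c n = f_{c 0} o f_{c 1} o ... o f_{c (n-1)} (0)
  (sequences are indexed from 0 instead of 1).\<close>
definition comp_pt :: "real \<Rightarrow> (nat \<Rightarrow> nat) \<Rightarrow> nat \<Rightarrow> real" where
  "comp_pt lam c n = foldr (\<lambda>i y. ifs lam i y) (map c [0..<n]) 0"

definition codings :: "real \<Rightarrow> real \<Rightarrow> (nat \<Rightarrow> nat) set" where
  "codings lam x = {c. (\<forall>n. c n \<in> {1,2,3,4}) \<and> (comp_pt lam c \<longlonglongrightarrow> x)}"

definition attractor :: "real \<Rightarrow> real set" where
  "attractor lam = (THE K. K \<noteq> {} \<and> compact K \<and> K = (\<Union>i\<in>{1,2,3,4::nat}. ifs lam i ` K))"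

definition U :: "real \<Rightarrow> nat \<Rightarrow> real set" where
  "U lam k = {x \<in> attractor lam. finite (codings lam x) \<and> card (codings lam x) = k}"

end

theory Submission
  imports Defs
begin

definition tt :: "real \<Rightarrow> nat \<Rightarrow> real" where
  "tt lam i = (if i = 1 then 0 else if i = 2 then 2*lam else if i = 3 then 3*lam - lam^2 else 1 - lam)"

definition pi :: "real \<Rightarrow> (nat \<Rightarrow> nat) \<Rightarrow> real" where
  "pi lam c = (\<Sum>k. lam^k * tt lam (c k))"

definition cod :: "real \<Rightarrow> real \<Rightarrow> (nat \<Rightarrow> nat) set" where
  "cod lam x = {c. (\<forall>n. c n \<in> {1,2,3,4}) \<and> pi lam c = x}"

lemma ifs_tt: "ifs lam i z = lam * z + tt lam i"
  by (simp add: ifs_def tt_def)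

lemma foldr_gen:
  "foldr (\<lambda>i y. ifs lam i y) (map c [0..<n]) z = (\<Sum>k<n. lam^k * tt lam (c k)) + lam^n * z"
proof (induction n arbitrary: z)
  case 0 then show ?case by simp
next
  case (Suc n)
  show ?case using Suc[of "ifs lam (c n) z"]
    by (simp add: ifs_tt algebra_simps)
qed

lemma comp_pt_eq: "comp_pt lam c = (\<lambda>n. \<Sum>k<n. lam^k * tt lam (c k))"
  by (rule ext) (simp add: comp_pt_def foldr_gen)

locale lamctx =
  fixes lam :: real
  assumes pos: "0 < lam" and small: "lam < 1/4" and quad: "lam^2 - 5*lam + 1 > 0"
begin

lemma sq_lt: "lam^2 < lam"
proof -
  have "lam * lam < lam * 1" using pos small by (intro mult_strict_left_mono) auto
  then show ?thesis by (simp add: power2_eq_square)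
qed

lemma sq_pos: "0 < lam^2" using pos by simp

lemma tt_bound: "\<bar>tt lam i\<bar> \<le> 1"
proof -
  have "tt lam i \<in> {0, 2*lam, 3*lam - lam^2, 1 - lam}" by (simp add: tt_def)
  then show ?thesis using pos small sq_lt sq_pos
    by (elim insertE emptyE) (simp_all only: abs_le_iff, linarith+)
qed

lemma tt_dig: "i \<in> {1,2,3,4} \<Longrightarrow> 0 \<le> tt lam i \<and> tt lam i \<le> 1 - lam"
  using pos small sq_lt quad unfolding tt_def by auto

lemma summ: "summable (\<lambda>k. lam^k * tt lam (c k))"
proof (rule summable_comparison_test)
  show "\<exists>N. \<forall>n\<ge>N. norm (lam^n * tt lam (c n)) \<le> lam^n"
    using pos tt_bound by (auto simp: abs_mult intro!: mult_left_le)
  show "summable (\<lambda>n. lam^n)" using pos small by (intro summable_geometric) auto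
qed

lemma codings_eq: "codings lam x = cod lam x"
proof -
  have "comp_pt lam c \<longlonglongrightarrow> x \<longleftrightarrow> pi lam c = x" for c
    using summable_LIMSEQ[OF summ[of c]] LIMSEQ_unique
    by (auto simp: comp_pt_eq pi_def)
  then show ?thesis by (simp add: codings_def cod_def)
qed

lemma pi_split: "pi lam c = tt lam (c 0) + lam * pi lam (c \<circ> Suc)"
proof -
  have e: "(\<Sum>n. lam^(Suc n) * tt lam (c (Suc n))) = lam * pi lam (c \<circ> Suc)"
    using suminf_mult[OF summ[of "c \<circ> Suc"], of lam] by (simp add: pi_def mult.assoc)
  have "pi lam (c \<circ> Suc) = (\<Sum>n. lam^(Suc n) * tt lam (c (Suc n))) / lam"
    unfolding e using pos by simp
  also have "\<dots> = (pi lam c - tt lam (c 0)) / lam"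
    using suminf_split_head[OF summ[of c]] by (simp add: pi_def)
  finally show ?thesis using pos by (simp add: field_simps)
qed

lemma pi_range: assumes "\<forall>n. c n \<in> {1,2,3,4}" shows "0 \<le> pi lam c \<and> pi lam c \<le> 1"
proof
  show "0 \<le> pi lam c" unfolding pi_def
    using assms tt_dig pos by (intro suminf_nonneg summ) simp
  have "pi lam c \<le> (\<Sum>k. (1 - lam) * lam^k)" unfolding pi_def
  proof (rule suminf_le)
    show "lam ^ n * tt lam (c n) \<le> (1 - lam) * lam ^ n" for n
      using assms tt_dig[of "c n"] pos by (simp add: mult.commute mult_left_mono)
    show "summable (\<lambda>k. lam ^ k * tt lam (c k))" by (rule summ)
    show "summable (\<lambda>k. (1 - lam) * lam ^ k)" using pos small
      by (intro summable_mult summable_geometric) auto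
  qed
  also have "\<dots> = (1 - lam) * (\<Sum>k. lam^k)"
    using pos small by (intro suminf_mult summable_geometric) auto
  also have "\<dots> = 1" using pos small
    by (simp add: suminf_geometric)
  finally show "pi lam c \<le> 1" .
qed


lemma pi_first: assumes "\<forall>n. c n \<in> {1,2,3,4}"
  shows "tt lam (c 0) \<le> pi lam c \<and> pi lam c \<le> tt lam (c 0) + lam"
proof -
  have "\<forall>n. (c \<circ> Suc) n \<in> {1,2,3,4}" using assms by simp
  from pi_range[OF this] have A: "0 \<le> pi lam (c \<circ> Suc)" "pi lam (c \<circ> Suc) \<le> 1" by blast+
  have "0 \<le> lam * pi lam (c \<circ> Suc)" using A pos by simp
  moreover have "lam * pi lam (c \<circ> Suc) \<le> lam" using mult_left_mono[OF A(2) less_imp_le[OF pos]] by simp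
  ultimately have "0 \<le> lam * pi lam (c \<circ> Suc) \<and> lam * pi lam (c \<circ> Suc) \<le> lam" by blast
  then show ?thesis using pi_split[of c] by linarith
qed

lemma diff_first:
  assumes "c \<in> cod lam x" "d \<in> cod lam x" "c 0 \<noteq> d 0"
  shows "(c 0 = 2 \<and> d 0 = 3) \<or> (c 0 = 3 \<and> d 0 = 2)"
proof -
  have dc: "\<forall>n. c n \<in> {1,2,3,4}" "\<forall>n. d n \<in> {1,2,3,4}" and e: "pi lam c = pi lam d"
    using assms by (auto simp: cod_def)
  have rc: "tt lam (c 0) \<le> pi lam c \<and> pi lam c \<le> tt lam (c 0) + lam" by (rule pi_first[OF dc(1)])
  have rd: "tt lam (d 0) \<le> pi lam d \<and> pi lam d \<le> tt lam (d 0) + lam" by (rule pi_first[OF dc(2)])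
  have c0: "c 0 \<in> {1,2,3,4}" and d0: "d 0 \<in> {1,2,3,4}" using dc by auto
  show ?thesis using c0 d0 rc rd e assms(3) pos small sq_lt quad
    by (auto simp: tt_def)
qed

definition P2 :: "nat \<Rightarrow> nat \<Rightarrow> (nat \<Rightarrow> nat) \<Rightarrow> (nat \<Rightarrow> nat)" where
  "P2 a b e = case_nat a (case_nat b e)"

lemma pi_P2: "pi lam (P2 a b e) = tt lam a + lam * (tt lam b + lam * pi lam e)"
proof -
  have 1: "P2 a b e \<circ> Suc = case_nat b e" by (rule ext) (simp add: P2_def)
  have 2: "case_nat b e \<circ> Suc = e" by (rule ext) simp
  show ?thesis using pi_split[of "P2 a b e"] pi_split[of "case_nat b e"]
    by (simp add: 1 2) (simp add: P2_def)
qed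

lemma inj_P2: "inj (P2 a b)"
proof (rule injI)
  fix e e' assume "P2 a b e = P2 a b e'"
  then have "P2 a b e (Suc (Suc n)) = P2 a b e' (Suc (Suc n))" for n by simp
  then show "e = e'" by (auto simp: P2_def)
qed

lemma split23:
  assumes "c \<in> cod lam x" "d \<in> cod lam x" "c 0 = 2" "d 0 = 3"
  shows "\<exists>z. cod lam z \<noteq> {} \<and>
     (finite (cod lam x) \<longrightarrow> finite (cod lam z) \<and> card (cod lam x) = 2 * card (cod lam z))"
proof -
  define z where "z = (x - 3*lam + lam^2) / lam^2"
  have zx: "x = 3*lam - lam^2 + lam^2 * z" using pos unfolding z_def by (simp add: field_simps)
  have xlo: "3*lam - lam^2 \<le> x" and xhi: "x \<le> 3*lam"
  proof -
    have "\<forall>n. d n \<in> {1,2,3,4}" "pi lam d = x" using assms by (auto simp: cod_def)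
    from pi_first[OF this(1)] this(2) assms(4) show "3*lam - lam^2 \<le> x" by (simp add: tt_def)
    have "\<forall>n. c n \<in> {1,2,3,4}" "pi lam c = x" using assms by (auto simp: cod_def)
    from pi_first[OF this(1)] this(2) assms(3) show "x \<le> 3*lam" by (simp add: tt_def)
  qed
  have sub: "cod lam x \<subseteq> P2 2 4 ` cod lam z \<union> P2 3 1 ` cod lam z"
  proof
    fix e assume e: "e \<in> cod lam x"
    have de: "\<forall>n. e n \<in> {1,2,3,4}" and pe: "pi lam e = x" using e by (auto simp: cod_def)
    have d1: "\<forall>n. (e \<circ> Suc) n \<in> {1,2,3,4}" and d2: "\<forall>n. (e \<circ> Suc \<circ> Suc) n \<in> {1,2,3,4}"
      using de by auto
    have r0: "tt lam (e 0) \<le> x \<and> x \<le> tt lam (e 0) + lam" using pi_first[OF de] pe by simp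
    have r1: "tt lam (e 1) \<le> pi lam (e \<circ> Suc) \<and> pi lam (e \<circ> Suc) \<le> tt lam (e 1) + lam"
      using pi_first[OF d1] unfolding comp_def by simp
    have s1: "x = tt lam (e 0) + lam * pi lam (e \<circ> Suc)" using pi_split[of e] pe by simp
    have s2: "pi lam (e \<circ> Suc) = tt lam (e 1) + lam * pi lam (e \<circ> Suc \<circ> Suc)"
      using pi_split[of "e \<circ> Suc"] by simp
    have e0: "e 0 \<in> {1,2,3,4}" and e1: "e 1 \<in> {1,2,3,4}" using de by auto
    have "e 0 = 2 \<or> e 0 = 3" using e0 r0 xlo xhi pos small sq_lt quad
      by (auto simp: tt_def)
    then show "e \<in> P2 2 4 ` cod lam z \<union> P2 3 1 ` cod lam z"
    proof
      assume h: "e 0 = 2"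
      have "lam * (1 - lam) \<le> lam * pi lam (e \<circ> Suc)"
        using s1 h xlo by (simp add: tt_def power2_eq_square algebra_simps)
      then have "1 - lam \<le> pi lam (e \<circ> Suc)" using pos
        by (simp add: mult_le_cancel_left_pos)
      then have h1: "e 1 = 4"
      proof (rule contrapos_pp)
        assume "e 1 \<noteq> 4"
        then have "e 1 = 1 \<or> e 1 = 2 \<or> e 1 = 3" using e1 by auto
        then have "tt lam (e 1) + lam < 1 - lam" using pos small sq_lt quad
          by (auto simp: tt_def)
        then show "\<not> 1 - lam \<le> pi lam (e \<circ> Suc)" using r1 by linarith
      qed
      have eq: "e = P2 2 4 (e \<circ> Suc \<circ> Suc)"
        by (rule ext) (auto simp: P2_def h h1[simplified] split: nat.split)
      have "lam^2 * pi lam (e \<circ> Suc \<circ> Suc) = lam^2 * z"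
        using s1 s2 h h1 zx by (auto simp: tt_def power2_eq_square algebra_simps)
      then have "pi lam (e \<circ> Suc \<circ> Suc) = z" using pos by simp
      then have "e \<circ> Suc \<circ> Suc \<in> cod lam z" using d2 by (simp add: cod_def)
      then show ?thesis using eq by blast
    next
      assume h: "e 0 = 3"
      have "lam * pi lam (e \<circ> Suc) \<le> lam * lam"
        using s1 h xhi by (simp add: tt_def power2_eq_square algebra_simps)
      then have "pi lam (e \<circ> Suc) \<le> lam" using pos
        by (simp add: mult_le_cancel_left_pos)
      then have h1: "e 1 = 1"
      proof (rule contrapos_pp)
        assume "e 1 \<noteq> 1"
        then have "e 1 = 4 \<or> e 1 = 2 \<or> e 1 = 3" using e1 by auto
        then have "tt lam (e 1) > lam" using pos small sq_lt quad
          by (auto simp: tt_def)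
        then show "\<not> pi lam (e \<circ> Suc) \<le> lam" using r1 by linarith
      qed
      have eq: "e = P2 3 1 (e \<circ> Suc \<circ> Suc)"
        by (rule ext) (auto simp: P2_def h h1[simplified] split: nat.split)
      have "lam^2 * pi lam (e \<circ> Suc \<circ> Suc) = lam^2 * z"
        using s1 s2 h h1 zx by (auto simp: tt_def power2_eq_square algebra_simps)
      then have "pi lam (e \<circ> Suc \<circ> Suc) = z" using pos by simp
      then have "e \<circ> Suc \<circ> Suc \<in> cod lam z" using d2 by (simp add: cod_def)
      then show ?thesis using eq by blast
    qed
  qed
  have sup: "P2 2 4 ` cod lam z \<union> P2 3 1 ` cod lam z \<subseteq> cod lam x"
  proof -
    have "P2 a b e \<in> cod lam x" if "e \<in> cod lam z" "(a = 2 \<and> b = 4) \<or> (a = 3 \<and> b = 1)" for a b e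
    proof -
      have "\<forall>n. P2 a b e n \<in> {1,2,3,4}" using that by (auto simp: cod_def P2_def split: nat.split)
      moreover have "pi lam (P2 a b e) = x" using that zx
        by (auto simp: pi_P2 cod_def tt_def power2_eq_square algebra_simps)
      ultimately show ?thesis by (simp add: cod_def)
    qed
    then show ?thesis by blast
  qed
  have eqx: "cod lam x = P2 2 4 ` cod lam z \<union> P2 3 1 ` cod lam z" using sub sup by blast
  have disj: "P2 2 4 ` cod lam z \<inter> P2 3 1 ` cod lam z = {}"
  proof (rule ccontr)
    assume "\<not> ?thesis"
    then obtain a b where "P2 2 4 a = P2 3 1 b" by blast
    then have "P2 2 4 a 0 = P2 3 1 b 0" by simp
    then show False by (simp add: P2_def)
  qed
  have ne: "cod lam z \<noteq> {}" using sub assms(1) by blast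
  show ?thesis
  proof (cases "finite (cod lam x)")
    case True
    then have "finite (P2 2 4 ` cod lam z)" using eqx by simp
    then have fz: "finite (cod lam z)" using inj_P2 finite_imageD inj_on_subset by blast
    have "card (cod lam x) = card (P2 2 4 ` cod lam z) + card (P2 3 1 ` cod lam z)"
      unfolding eqx using disj fz by (intro card_Un_disjoint) auto
    also have "\<dots> = 2 * card (cod lam z)"
      using card_image[OF inj_on_subset[OF inj_P2[of 2 4] subset_UNIV]]
            card_image[OF inj_on_subset[OF inj_P2[of 3 1] subset_UNIV]] by simp
    finally show ?thesis using ne fz by blast
  next
    case False
    then show ?thesis using ne by blast
  qed
qed


lemma shift_bij:
  assumes "\<forall>e\<in>cod lam x. e 0 = i" "i \<in> {1,2,3,4}"
  shows "bij_betw (\<lambda>e. e \<circ> Suc) (cod lam x) (cod lam ((x - tt lam i) / lam))"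
proof (rule bij_betw_byWitness[where f' = "case_nat i"])
  show "\<forall>a\<in>cod lam x. case_nat i (a \<circ> Suc) = a"
  proof
    fix a assume "a \<in> cod lam x"
    then have "a 0 = i" using assms by blast
    then show "case_nat i (a \<circ> Suc) = a" by (intro ext) (simp split: nat.split)
  qed
  show "\<forall>a'\<in>cod lam ((x - tt lam i) / lam). case_nat i a' \<circ> Suc = a'"
    by (auto intro: ext)
  show "(\<lambda>e. e \<circ> Suc) ` cod lam x \<subseteq> cod lam ((x - tt lam i) / lam)"
  proof
    fix f assume "f \<in> (\<lambda>e. e \<circ> Suc) ` cod lam x"
    then obtain e where e: "e \<in> cod lam x" "f = e \<circ> Suc" by blast
    have "e 0 = i" using e assms by blast
    moreover have "pi lam e = x" "\<forall>n. e n \<in> {1,2,3,4}" using e by (auto simp: cod_def)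
    ultimately show "f \<in> cod lam ((x - tt lam i) / lam)"
      using pi_split[of e] pos e(2) by (auto simp: cod_def field_simps)
  qed
  show "case_nat i ` cod lam ((x - tt lam i) / lam) \<subseteq> cod lam x"
  proof
    fix f assume "f \<in> case_nat i ` cod lam ((x - tt lam i) / lam)"
    then obtain e where e: "e \<in> cod lam ((x - tt lam i) / lam)" "f = case_nat i e" by blast
    have fs: "f \<circ> Suc = e" using e(2) by (auto intro: ext)
    have "\<forall>n. f n \<in> {1,2,3,4}" using e assms(2) by (auto simp: cod_def split: nat.split)
    moreover have "pi lam f = x" using pi_split[of f] fs e pos by (simp add: cod_def)
    ultimately show "f \<in> cod lam x" by (simp add: cod_def)
  qed
qed

lemma main_step:
  assumes "\<forall>j<k. c j = d j" "c k \<noteq> d k" "c \<in> cod lam x" "d \<in> cod lam x" "finite (cod lam x)"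
  shows "\<exists>z. cod lam z \<noteq> {} \<and> finite (cod lam z) \<and> card (cod lam x) = 2 * card (cod lam z)"
  using assms
proof (induction k arbitrary: x c d)
  case 0
  then have "c 0 \<noteq> d 0" by simp
  from diff_first[OF "0.prems"(3,4) this] show ?case
    using split23[OF "0.prems"(3,4)] split23[OF "0.prems"(4,3)] "0.prems"(5) by blast
next
  case (Suc k)
  have cd0: "c 0 = d 0" using Suc.prems(1) by auto
  show ?case
  proof (cases "\<forall>e\<in>cod lam x. e 0 = c 0")
    case False
    then obtain e where e: "e \<in> cod lam x" "e 0 \<noteq> c 0" by blast
    from diff_first[OF Suc.prems(3) e(1)] e(2) show ?thesis
      using split23[OF Suc.prems(3) e(1)] split23[OF e(1) Suc.prems(3)] Suc.prems(5) by metis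
  next
    case True
    have "c 0 \<in> {1,2,3,4}" using Suc.prems(3) by (simp add: cod_def)
    note b = shift_bij[OF True this]
    define y where "y = (x - tt lam (c 0)) / lam"
    have b': "bij_betw (\<lambda>e. e \<circ> Suc) (cod lam x) (cod lam y)" using b by (simp add: y_def)
    have cy: "c \<circ> Suc \<in> cod lam y" "d \<circ> Suc \<in> cod lam y"
      using b' Suc.prems(3,4) bij_betwE by blast+
    have fy: "finite (cod lam y)" using b' Suc.prems(5) bij_betw_finite by blast
    have "\<forall>j<k. (c \<circ> Suc) j = (d \<circ> Suc) j" "(c \<circ> Suc) k \<noteq> (d \<circ> Suc) k"
      using Suc.prems(1,2) by auto
    from Suc.IH[OF this cy fy] obtain z where
      "cod lam z \<noteq> {}" "finite (cod lam z)" "card (cod lam y) = 2 * card (cod lam z)" by blast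
    moreover have "card (cod lam x) = card (cod lam y)" using b' bij_betw_same_card by blast
    ultimately show ?thesis by auto
  qed
qed

lemma pow2: "finite (cod lam x) \<Longrightarrow> cod lam x \<noteq> {} \<Longrightarrow> \<exists>N. card (cod lam x) = 2^N"
proof (induction "card (cod lam x)" arbitrary: x rule: less_induct)
  case less
  show ?case
  proof (cases "card (cod lam x) = 1")
    case True then show ?thesis by (metis power_0)
  next
    case False
    have "card (cod lam x) \<noteq> 0" using less.prems by simp
    with False have "2 \<le> card (cod lam x)" by linarith
    obtain c where c: "c \<in> cod lam x" using less.prems by blast
    have "card (cod lam x - {c}) \<ge> 1" using \<open>2 \<le> card (cod lam x)\<close> c less.prems(1) by simp
    then have "cod lam x - {c} \<noteq> {}" by (metis card.empty not_one_le_zero)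
    then obtain d where "d \<in> cod lam x - {c}" by blast
    then have cd: "c \<in> cod lam x" "d \<in> cod lam x" "c \<noteq> d" using c by auto
    then have "\<exists>k. c k \<noteq> d k" by (meson ext)
    define k where "k = (LEAST k. c k \<noteq> d k)"
    have k1: "c k \<noteq> d k" unfolding k_def using \<open>\<exists>k. c k \<noteq> d k\<close> by (rule LeastI_ex)
    have k2: "\<forall>j<k. c j = d j" unfolding k_def using not_less_Least by blast
    from main_step[OF k2 k1 cd(1,2) less.prems(1)] obtain z where
      z: "cod lam z \<noteq> {}" "finite (cod lam z)" "card (cod lam x) = 2 * card (cod lam z)" by blast
    have "card (cod lam z) > 0" using z(1,2) by (simp add: card_gt_0_iff)
    then have "card (cod lam z) < card (cod lam x)" using z(3) by simp
    from less.hyps[OF this z(2,1)] obtain N where "card (cod lam z) = 2^N" by blast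
    then have "card (cod lam x) = 2^(Suc N)" using z(3) by simp
    then show ?thesis by blast
  qed
qed

end

theorem lemma2p31:
  fixes lam :: real and i :: nat
  assumes "0 < lam" and "lam < (5 - sqrt 21) / 2"
    and "i \<ge> 3" and "\<not> (\<exists>m::nat. 2 * i = 2 ^ m)"
  shows "U lam (2 * i) = {}"
proof -
  have s: "sqrt 21 ^ 2 = 21" by simp
  have s1: "9/2 < sqrt 21" by (rule real_less_rsqrt) (simp add: power2_eq_square)
  have s2: "sqrt 21 < 5" by (rule real_sqrt_less_mono[of 21 25, simplified]) 
  have small: "lam < 1/4" using assms(2) s1 by simp
  have "(lam - (5 - sqrt 21)/2) * (lam - (5 + sqrt 21)/2) > 0"
    using assms(2) s1 s2 by (intro mult_neg_neg) auto
  then have quad: "lam^2 - 5*lam + 1 > 0"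
    using s by (simp add: field_simps power2_eq_square)
  interpret lamctx lam using assms(1) small quad by unfold_locales
  show ?thesis
  proof (rule ccontr)
    assume "U lam (2*i) \<noteq> {}"
    then obtain x where "finite (codings lam x)" "card (codings lam x) = 2*i"
      by (auto simp: U_def)
    then have f: "finite (cod lam x)" and c: "card (cod lam x) = 2*i" by (simp_all add: codings_eq)
    then have "cod lam x \<noteq> {}" using assms(3) by auto
    from pow2[OF f this] c assms(4) show False by metis
  qed
qed

end
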